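(* Let $\mathcal{X}\subseteq\mathbb{R}^n$ be compact. Then $\mathcal{X}$ is standard comonotone if and only if its convex hull $\operatorname{conv}(\mathcal{X})$ is standard comonotone.
   Context: $\Pi_n$ is the set of permutations of $[n]$; for $\pi\in\Pi_n$, $\mathcal{Z}(\pi)=\{x\in\mathbb{R}^n: x_{\pi(1)}\ge\cdots\ge x_{\pi(n)}\}$. A set $\mathcal{X}\subseteq\mathbb{R}^n$ is standard comonotone if for every $\pi\in\Pi_n$ and every $v\in\mathcal{Z}(\pi)$, whenever $\max_{x\in\mathcal{X}}v^\top x$ attains its optimum, it has an optimal solution in $\mathcal{Z}(\pi)$. *)

theory Defs
  imports "HOL-Analysis.Analysis"
begin

text \<open>Coordinates of \<open>real ^ 'n\<close> are indexed by the finite type \<open>'n\<close>, n = CARD('n).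
  A permutation of [n] is a bijection \<open>\<pi>\<close> from positions \<open>{..<CARD('n)}\<close> onto the index type.\<close>

definition perm_idx :: "(nat \<Rightarrow> 'n::finite) \<Rightarrow> bool" where
  "perm_idx \<pi> \<longleftrightarrow> bij_betw \<pi> {..<CARD('n)} (UNIV :: 'n set)"

definition Zcone :: "(nat \<Rightarrow> 'n::finite) \<Rightarrow> (real ^ 'n) set" where
  "Zcone \<pi> = {x. \<forall>i j. i \<le> j \<and> j < CARD('n) \<longrightarrow> x $ \<pi> j \<le> x $ \<pi> i}"

definition is_optimal :: "(real ^ 'n) set \<Rightarrow> real ^ 'n \<Rightarrow> real ^ 'n \<Rightarrow> bool" where
  "is_optimal X v x \<longleftrightarrow> x \<in> X \<and> (\<forall>y\<in>X. v \<bullet> y \<le> v \<bullet> x)"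

definition standard_comonotone :: "(real ^ 'n::finite) set \<Rightarrow> bool" where
  "standard_comonotone X \<longleftrightarrow>
     (\<forall>\<pi> v. perm_idx \<pi> \<and> v \<in> Zcone \<pi> \<and> (\<exists>x. is_optimal X v x)
        \<longrightarrow> (\<exists>x \<in> Zcone \<pi>. is_optimal X v x))"

end

theory Submission
  imports Defs
begin

lemma opt_hull:
  assumes "is_optimal X v x"
  shows "is_optimal (convex hull X) v x"
proof -
  have "X \<subseteq> {y. v \<bullet> y \<le> v \<bullet> x}" using assms by (auto simp: is_optimal_def)
  hence "convex hull X \<subseteq> {y. v \<bullet> y \<le> v \<bullet> x}"
    by (intro hull_minimal) (auto simp: convex_halfspace_le)
  thus ?thesis using assms hull_inc[of x X] by (auto simp: is_optimal_def)
qed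

lemma closed_Zcone: "closed (Zcone \<pi>)"
  unfolding Zcone_def
proof (intro closed_Collect_all closed_Collect_imp closed_Collect_le continuous_intros)
  fix i j :: nat
  show "open {x :: real^'n. i \<le> j \<and> j < CARD('n)}"
    by (cases "i \<le> j \<and> j < CARD('n)") auto
qed

lemma sq_norm_add: "norm (a + b :: real^'n) ^ 2 = norm a ^ 2 + 2 * (a \<bullet> b) + norm b ^ 2"
  by (simp add: power2_norm_eq_inner inner_add_left inner_add_right inner_commute)

lemma dist_aux: fixes y p w :: "real^'n" shows "dist (p - w) y = norm((y-p)+w)"
proof -
  have "p - w - y = - ((y-p)+w)" by (simp add: algebra_simps)
  thus ?thesis by (simp only: dist_norm norm_minus_cancel)
qed

lemma ball_in: fixes y p w :: "real^'n"
  assumes K: "norm(y-p)^2 + 2*(w\<bullet>(y-p)) \<le> 0"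
  shows "y \<in> cball (p - w) (norm w)"
proof -
  have "norm((y-p)+w)^2 \<le> norm w ^2"
    using K sq_norm_add[of "y-p" w] inner_commute[of "y-p" w] by linarith
  hence "norm((y-p)+w) \<le> norm w" by (rule power2_le_imp_le) simp
  thus ?thesis using dist_aux[of p w y] by simp
qed

lemma ball_out: fixes y p w :: "real^'n"
  assumes "y \<in> cball (p - w) (norm w)"
  shows "norm(y-p)^2 + 2*(w\<bullet>(y-p)) \<le> 0"
proof -
  have "norm((y-p)+w) \<le> norm w" using assms dist_aux[of p w y] by simp
  hence "norm((y-p)+w)^2 \<le> norm w^2" by (intro power_mono) auto
  thus ?thesis using sq_norm_add[of "y-p" w] inner_commute[of "y-p" w] by linarith
qed

lemma forward:
  assumes "compact X" "standard_comonotone X"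
  shows "standard_comonotone (convex hull X)"
  unfolding standard_comonotone_def
proof (intro allI impI)
  fix \<pi> v assume H: "perm_idx \<pi> \<and> v \<in> Zcone \<pi> \<and> (\<exists>x. is_optimal (convex hull X) v x)"
  then obtain x1 where "is_optimal (convex hull X) v x1" by blast
  hence "convex hull X \<noteq> {}" by (auto simp: is_optimal_def)
  hence ne: "X \<noteq> {}" by simp
  obtain x0 where x0: "x0 \<in> X" "\<forall>y\<in>X. v \<bullet> y \<le> v \<bullet> x0"
    using continuous_attains_sup[OF assms(1) ne, of "\<lambda>y. v \<bullet> y"]
      continuous_on_inner[OF continuous_on_const continuous_on_id, of X v]
    by auto
  hence "is_optimal X v x0" by (simp add: is_optimal_def)
  then obtain x where "x \<in> Zcone \<pi>" "is_optimal X v x"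
    using assms(2) H unfolding standard_comonotone_def by blast
  thus "\<exists>x\<in>Zcone \<pi>. is_optimal (convex hull X) v x" using opt_hull by blast
qed

lemma backward:
  fixes X :: "(real ^ 'n) set"
  assumes "compact X" "standard_comonotone (convex hull X)"
  shows "standard_comonotone X"
  unfolding standard_comonotone_def
proof (intro allI impI)
  fix \<pi> v assume H: "perm_idx \<pi> \<and> v \<in> Zcone \<pi> \<and> (\<exists>x. is_optimal X v x)"
  then obtain x0 where x0: "is_optimal X v x0" by blast
  have pi: "perm_idx \<pi>" and vZ: "v \<in> Zcone \<pi>" using H by auto
  show "\<exists>x\<in>Zcone \<pi>. is_optimal X v x"
  proof (rule ccontr)
    assume nz: "\<not> ?thesis"
    define M where "M = v \<bullet> x0"
    obtain M' where M': "M' < M" "\<forall>y\<in>X \<inter> Zcone \<pi>. v \<bullet> y \<le> M'"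
    proof (cases "X \<inter> Zcone \<pi> = {}")
      case True then show ?thesis using that[of "M-1"] by auto
    next
      case False
      have "compact (X \<inter> Zcone \<pi>)" using assms(1) closed_Zcone by (rule compact_Int_closed)
      then obtain y where y: "y \<in> X \<inter> Zcone \<pi>" "\<forall>z\<in>X \<inter> Zcone \<pi>. v \<bullet> z \<le> v \<bullet> y"
        using continuous_attains_sup[of "X \<inter> Zcone \<pi>" "\<lambda>z. v \<bullet> z"] False
          continuous_on_inner[OF continuous_on_const continuous_on_id, of "X \<inter> Zcone \<pi>" v]
        by auto
      have "v \<bullet> y < M"
      proof (rule ccontr)
        assume "\<not> v \<bullet> y < M"
        hence "is_optimal X v y" using x0 y unfolding is_optimal_def M_def by force
        thus False using nz y by blast
      qed
      then show ?thesis using that[of "v \<bullet> y"] y by auto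
    qed
    obtain B where B: "B > 0" "\<forall>y\<in>X. norm y \<le> B"
      using compact_imp_bounded[OF assms(1)] bounded_pos by blast
    define \<rho> where "\<rho> = inv_into {..<CARD('n)} \<pi>"
    have inj: "inj_on \<pi> {..<CARD('n)}" using pi unfolding perm_idx_def
      by (rule bij_betw_imp_inj_on)
    have rho: "\<rho> (\<pi> i) = i" if "i < CARD('n)" for i
      unfolding \<rho>_def using inv_into_f_f[OF inj] that by simp
    define q :: "real^'n" where "q = (\<chi> j. 2*B*real(\<rho> j))"
    have qZ: "y - q \<in> Zcone \<pi>" if "y \<in> X" for y
      unfolding Zcone_def
    proof (intro CollectI allI impI)
      fix i j assume ij: "i \<le> j \<and> j < CARD('n)"
      have qi: "q $ \<pi> i = 2*B*real i" and qj: "q $ \<pi> j = 2*B*real j"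
        using rho ij by (auto simp: q_def)
      have b1: "\<bar>y $ \<pi> i\<bar> \<le> B" "\<bar>y $ \<pi> j\<bar> \<le> B"
        using component_le_norm_cart[of y] B that by (meson order_trans)+
      show "(y - q) $ \<pi> j \<le> (y - q) $ \<pi> i"
      proof (cases "i = j")
        case True then show ?thesis by simp
      next
        case False
        hence "real j \<ge> real i + 1" using ij by simp
        hence "2*B*real j \<ge> 2*B*(real i + 1)" using B by (intro mult_left_mono) auto
        thus ?thesis using qi qj b1 by (simp add: algebra_simps abs_le_iff)
      qed
    qed
    define C where "C = (B + norm q)^2"
    have Cb: "norm (y - q)^2 \<le> C" if "y\<in>X" for y
    proof -
      have "norm (y - q) \<le> B + norm q" using norm_triangle_ineq4[of y q] B that by force
      thus ?thesis unfolding C_def by (intro power_mono) auto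
    qed
    have Cpos: "C \<ge> 0" unfolding C_def by simp
    define t where "t = (C + 1)/(M - M')"
    have tpos: "t > 0" unfolding t_def using M' Cpos by simp
    have tC: "t*(M-M') = C + 1" unfolding t_def using M' by simp
    define h where "h = (\<lambda>y. t*(v\<bullet>y) + norm(y-q)^2/2)"
    have x0X: "x0 \<in> X" using x0 by (simp add: is_optimal_def)
    have hc: "continuous_on X h" unfolding h_def by (intro continuous_intros) auto
    obtain p where p: "p\<in>X" "\<forall>y\<in>X. h y \<le> h p"
      using hc continuous_attains_sup[OF assms(1), of h] x0X by blast
    have "h x0 \<le> h p" using p x0X by blast
    hence "t*M + norm(x0-q)^2/2 \<le> t*(v\<bullet>p) + norm(p-q)^2/2" unfolding h_def M_def .
    moreover have "norm(p-q)^2 \<le> C" using Cb p by blast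
    moreover have "norm(x0-q)^2 \<ge> 0" by simp
    moreover have "t*M = C + 1 + t*M'" using tC by (simp add: algebra_simps)
    ultimately have "t*(v\<bullet>p) > t*M'" using Cpos by linarith
    hence "v\<bullet>p > M'" using tpos by simp
    hence pnZ: "p \<notin> Zcone \<pi>" using M'(2) p(1) by force
    define w where "w = t *\<^sub>R v + (p - q)"
    have wZ: "w \<in> Zcone \<pi>"
      using vZ qZ[OF p(1)] tpos unfolding Zcone_def w_def
    proof (intro CollectI allI impI)
      fix i j assume ij: "i \<le> j \<and> j < CARD('n)"
      have "v $ \<pi> j \<le> v $ \<pi> i" using vZ ij unfolding Zcone_def by blast
      hence "t * v $ \<pi> j \<le> t * v $ \<pi> i" using tpos by (intro mult_left_mono) auto
      moreover have "(p - q) $ \<pi> j \<le> (p - q) $ \<pi> i" using qZ[OF p(1)] ij unfolding Zcone_def by blast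
      ultimately show "(t *\<^sub>R v + (p - q)) $ \<pi> j \<le> (t *\<^sub>R v + (p - q)) $ \<pi> i" by simp
    qed
    have K: "norm(y-p)^2 + 2*(w\<bullet>(y-p)) \<le> 0" if "y\<in>X" for y
    proof -
      have "h y \<le> h p" using p that by blast
      hence A: "t*(v\<bullet>y) + norm(y-q)^2/2 \<le> t*(v\<bullet>p) + norm(p-q)^2/2" unfolding h_def .
      have E: "norm(y-q)^2 = norm(y-p)^2 + 2*((y-p)\<bullet>(p-q)) + norm(p-q)^2"
        using sq_norm_add[of "y-p" "p-q"] by simp
      have "w\<bullet>(y-p) = t*(v\<bullet>y) - t*(v\<bullet>p) + (y-p)\<bullet>(p-q)"
        unfolding w_def by (simp add: inner_add_left inner_diff_right inner_commute algebra_simps)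
      thus ?thesis using A E by linarith
    qed
    have ball: "X \<subseteq> cball (p - w) (norm w)"
    proof
      fix y assume "y \<in> X"
      thus "y \<in> cball (p - w) (norm w)" by (intro ball_in K)
    qed
    have popt: "is_optimal X w p" unfolding is_optimal_def
    proof (intro conjI ballI)
      show "p \<in> X" by (rule p(1))
      fix y assume "y\<in>X"
      from K[OF this] zero_le_power2[of "norm(y-p)"] have "w\<bullet>(y-p) \<le> 0" by linarith
      thus "w \<bullet> y \<le> w \<bullet> p" by (simp add: inner_diff_right)
    qed
    have SC: "perm_idx \<pi> \<and> w \<in> Zcone \<pi> \<and> (\<exists>x. is_optimal (convex hull X) w x) \<longrightarrow> (\<exists>x \<in> Zcone \<pi>. is_optimal (convex hull X) w x)"
      using assms(2) unfolding standard_comonotone_def by blast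
    have "\<exists>x. is_optimal (convex hull X) w x" using opt_hull[OF popt] by (rule exI)
    then obtain z where z: "z \<in> Zcone \<pi>" "is_optimal (convex hull X) w z"
      using SC pi wZ by blast
    have "convex hull X \<subseteq> cball (p - w) (norm w)"
      using ball by (intro hull_minimal) (auto simp: convex_cball)
    hence "z \<in> cball (p - w) (norm w)" using z(2) by (auto simp: is_optimal_def)
    hence Z1: "norm(z-p)^2 + 2*(w\<bullet>(z-p)) \<le> 0" by (rule ball_out)
    have "p \<in> convex hull X" by (rule hull_inc[OF p(1)])
    hence "w\<bullet>p \<le> w\<bullet>z" using z(2) by (auto simp: is_optimal_def)
    hence "w\<bullet>(z-p) \<ge> 0" by (simp add: inner_diff_right)
    hence "norm(z-p)^2 \<le> 0" using Z1 by linarith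
    hence "z = p" by simp
    thus False using z(1) pnZ by simp
  qed
qed

theorem proposition2:
  fixes X :: "(real ^ 'n) set"
  assumes "compact X"
  shows "standard_comonotone X \<longleftrightarrow> standard_comonotone (convex hull X)"
  using forward[OF assms] backward[OF assms] by blast

end
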